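(* In the setting of the finite-to-infinite convergence (with $\mathbf x^{\mathrm{in}}\in\mathcal X^{\mathrm{rg}}(\alpha,\rho,p)$, $\mathbf X$ the $\mathcal X^{\mathrm{rg}}_{\mathcal T}(\alpha,\rho,p)$-valued solution of (DBM), $\mathbf X^n$ the finite-dimensional solutions on $\mathcal L_n$), let $\mathbf Y:=u(\mathbf X)$, $\mathbf Y^n:=(X^n_{a+1/2}-X^n_{a-1/2})_{a\in\mathcal L_n\cap\hat{\mathbb Z}}$, and define $\mathbf Y^{n,\infty}(t)\in[0,\infty]^{\hat{\mathbb Z}}$ by $Y^{n,\infty}_a(t):=Y^n_a(t)$ if $a\in\mathcal L_n$ and $Y^{n,\infty}_a(t):=\infty$ otherwise. Then almost surely $\mathbf Y^{1,\infty}(\cdot)\ge\mathbf Y^{2,\infty}(\cdot)\ge\cdots\ge\mathbf Y(\cdot)$ coordinatewise at all times.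
   Context: Fixed $\beta\ge1$, $\alpha\in(0,1)$, $\rho>0$, $p>1$. $\hat{\mathbb Z}=\tfrac12+\mathbb Z$; $\mathrm{Av}^p_{\mathcal I}(\mathbf y)=|\mathcal I\cap\hat{\mathbb Z}|^{-1}\sum_{a\in\mathcal I\cap\hat{\mathbb Z}}y_a^p$ (with $(0,m)=(m,0)$ for $m<0$). $\mathcal W=\{\mathbf x\in\mathbb R^{\mathbb Z}:x_i<x_{i+1}\}$, $u(\mathbf x)=(x_{a+1/2}-x_{a-1/2})_{a\in\hat{\mathbb Z}}$. $\mathcal X^{\mathrm{rg}}(\alpha,\rho,p)$: $\mathbf x\in\mathcal W$ with $\sup_{m\ne0}|\mathrm{Av}_{(0,m)}(u(\mathbf x))-\rho||m|^\alpha<\infty$ and $\sup_m\mathrm{Av}^p_{(0,m)}(u(\mathbf x))<\infty$; $\mathcal X^{\mathrm{rg}}_{\mathcal T}(\alpha,\rho,p)$: continuous $\mathcal W$-valued processes with these two suprema bounded uniformly on each $[0,t]$. (DBM): $X_i(t)=X_i(0)+B_i(t)+\beta\int_0^t\phi_i(\mathbf X(s))ds$, $\phi_i(\mathbf x)=\tfrac12\lim_{k\to\infty}\sum_{0<|j-i|\le k}(x_i-x_j)^{-1}$, $B_i$ independent standard Brownian motions; $\mathbf X$ is the unique $\mathcal X^{\mathrm{rg}}_{\mathcal T}(\alpha,\rho,p)$-valued solution from $\mathbf x^{\mathrm{in}}$. $i_n^+=\max\{i:x^{\mathrm{in}}_i<n\}$, $i_n^-=\min\{i:x^{\mathrm{in}}_i>-n\}$,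 $\mathcal L_n=[i_n^-,i_n^+]$; $\mathbf X^n$ is the pathwise unique strong solution, ordered for all times, of $X^n_i(t)=x^{\mathrm{in}}_i+B_i(t)+\beta\int_0^t\tfrac12\sum_{j\in\mathcal L_n\cap\mathbb Z,j\ne i}(X^n_i(s)-X^n_j(s))^{-1}ds$, $i\in\mathcal L_n\cap\mathbb Z$, driven by the same Brownian motions. *)

theory Defs
  imports "HOL-Probability.Probability"
begin

(* A gap index a in 1/2 + Z is encoded by the
   integer k with a = k + 1/2, so the gap u(x)_a = x_{a+1/2} - x_{a-1/2}
   is  x (k+1) - x k. *)

definition gap :: "(int \<Rightarrow> real) \<Rightarrow> int \<Rightarrow> real" where
  "gap x k = x (k + 1) - x k"

definition Wconf :: "(int \<Rightarrow> real) \<Rightarrow> bool" where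
  "Wconf x \<longleftrightarrow> (\<forall>i. x i < x (i + 1))"

(* Av^q_{(0,m)}(y) for m ~= 0; (0,m) = (m,0) if m < 0.
   The half-integers in (0,m) (resp. (m,0)) are k+1/2 with k in [min 0 m, max 0 m). *)
definition AvP :: "real \<Rightarrow> int \<Rightarrow> (int \<Rightarrow> real) \<Rightarrow> real" where
  "AvP q m y = (\<Sum>k\<in>{min 0 m..<max 0 m}. y k powr q) / real_of_int \<bar>m\<bar>"

definition Av :: "int \<Rightarrow> (int \<Rightarrow> real) \<Rightarrow> real" where
  "Av m y = (\<Sum>k\<in>{min 0 m..<max 0 m}. y k) / real_of_int \<bar>m\<bar>"

definition Xrg :: "real \<Rightarrow> real \<Rightarrow> real \<Rightarrow> (int \<Rightarrow> real) \<Rightarrow> bool" where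
  "Xrg \<alpha> \<rho> p x \<longleftrightarrow> Wconf x
     \<and> (\<exists>C. \<forall>m. m \<noteq> 0 \<longrightarrow> \<bar>Av m (gap x) - \<rho>\<bar> * real_of_int \<bar>m\<bar> powr \<alpha> \<le> C)
     \<and> (\<exists>C. \<forall>m. m \<noteq> 0 \<longrightarrow> AvP p m (gap x) \<le> C)"

definition XrgT :: "real \<Rightarrow> real \<Rightarrow> real \<Rightarrow> (int \<Rightarrow> real \<Rightarrow> real) \<Rightarrow> bool" where
  "XrgT \<alpha> \<rho> p X \<longleftrightarrow>
     (\<forall>i. continuous_on {0..} (X i))
     \<and> (\<forall>s\<ge>0. Wconf (\<lambda>i. X i s))
     \<and> (\<forall>t\<ge>0. \<exists>C. \<forall>s\<in>{0..t}. \<forall>m. m \<noteq> 0 \<longrightarrow>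
            \<bar>Av m (gap (\<lambda>i. X i s)) - \<rho>\<bar> * real_of_int \<bar>m\<bar> powr \<alpha> \<le> C)
     \<and> (\<forall>t\<ge>0. \<exists>C. \<forall>s\<in>{0..t}. \<forall>m. m \<noteq> 0 \<longrightarrow>
            AvP p m (gap (\<lambda>i. X i s)) \<le> C)"

definition phi_partial :: "(int \<Rightarrow> real) \<Rightarrow> int \<Rightarrow> nat \<Rightarrow> real" where
  "phi_partial x i k = (\<Sum>j\<in>{i - int k..i + int k} - {i}. 1 / (x i - x j))"

definition phi :: "(int \<Rightarrow> real) \<Rightarrow> int \<Rightarrow> real" where
  "phi x i = (1/2) * lim (phi_partial x i)"

definition iplus :: "(int \<Rightarrow> real) \<Rightarrow> nat \<Rightarrow> int" where
  "iplus x n = (GREATEST i. x i < real n)"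

definition iminus :: "(int \<Rightarrow> real) \<Rightarrow> nat \<Rightarrow> int" where
  "iminus x n = (LEAST i. x i > - real n)"

definition Ln :: "(int \<Rightarrow> real) \<Rightarrow> nat \<Rightarrow> int set" where
  "Ln x n = {iminus x n..iplus x n}"

definition std_BM :: "'a measure \<Rightarrow> (real \<Rightarrow> 'a \<Rightarrow> real) \<Rightarrow> bool" where
  "std_BM M B \<longleftrightarrow>
     (\<forall>t. B t \<in> borel_measurable M)
     \<and> (AE \<omega> in M. B 0 \<omega> = 0 \<and> continuous_on {0..} (\<lambda>t. B t \<omega>))
     \<and> (\<forall>s t. 0 \<le> s \<and> s < t \<longrightarrow>
          distributed M lborel (\<lambda>\<omega>. B t \<omega> - B s \<omega>)
            (\<lambda>x. ennreal (normal_density 0 (sqrt (t - s)) x)))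
     \<and> (\<forall>(n::nat) (ts::nat \<Rightarrow> real). 0 \<le> ts 0 \<and> strict_mono ts \<longrightarrow>
          prob_space.indep_vars M (\<lambda>_. borel)
            (\<lambda>k \<omega>. B (ts (Suc k)) \<omega> - B (ts k) \<omega>) {..<n})"

definition indep_BM_family :: "'a measure \<Rightarrow> (int \<Rightarrow> real \<Rightarrow> 'a \<Rightarrow> real) \<Rightarrow> bool" where
  "indep_BM_family M B \<longleftrightarrow>
     (\<forall>i. std_BM M (B i))
     \<and> prob_space.indep_vars M (\<lambda>_. Pi\<^sub>M {0..} (\<lambda>_. borel))
          (\<lambda>i \<omega>. restrict (\<lambda>t. B i t \<omega>) {0..}) UNIV"

definition DBM_path :: "real \<Rightarrow> real \<Rightarrow> real \<Rightarrow> real \<Rightarrow> (int \<Rightarrow> real)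
      \<Rightarrow> (int \<Rightarrow> real \<Rightarrow> real) \<Rightarrow> (int \<Rightarrow> real \<Rightarrow> real) \<Rightarrow> bool" where
  "DBM_path \<beta> \<alpha> \<rho> p xin Bw X \<longleftrightarrow>
     XrgT \<alpha> \<rho> p X
     \<and> (\<forall>i. \<forall>s\<ge>0. convergent (phi_partial (\<lambda>j. X j s) i))
     \<and> (\<forall>i. \<forall>t\<ge>0. set_integrable lborel {0..t} (\<lambda>s. phi (\<lambda>j. X j s) i)
          \<and> X i t = xin i + Bw i t + \<beta> * (LINT s:{0..t}|lborel. phi (\<lambda>j. X j s) i))"

definition finite_DBM_path :: "real \<Rightarrow> int set \<Rightarrow> (int \<Rightarrow> real)
      \<Rightarrow> (int \<Rightarrow> real \<Rightarrow> real) \<Rightarrow> (int \<Rightarrow> real \<Rightarrow> real) \<Rightarrow> bool" where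
  "finite_DBM_path \<beta> L xin Bw Xn \<longleftrightarrow>
     (\<forall>i\<in>L. continuous_on {0..} (Xn i))
     \<and> (\<forall>i\<in>L. \<forall>j\<in>L. i < j \<longrightarrow> (\<forall>t\<ge>0. Xn i t < Xn j t))
     \<and> (\<forall>i\<in>L. \<forall>t\<ge>0.
          set_integrable lborel {0..t}
            (\<lambda>s. (1/2) * (\<Sum>j\<in>L - {i}. 1 / (Xn i s - Xn j s)))
          \<and> Xn i t = xin i + Bw i t
              + \<beta> * (LINT s:{0..t}|lborel. (1/2) * (\<Sum>j\<in>L - {i}. 1 / (Xn i s - Xn j s))))"

(* Y^{n,oo}_a(t), a = k + 1/2: the gap of X^n if a \<in> L_n, otherwise +oo *)
definition Yinf :: "int set \<Rightarrow> (int \<Rightarrow> real \<Rightarrow> real) \<Rightarrow> int \<Rightarrow> real \<Rightarrow> ereal" where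
  "Yinf L Xn k t = (if k \<in> L \<and> k + 1 \<in> L then ereal (Xn (k + 1) t - Xn k t) else \<infinity>)"

end

theory Submission
  imports Defs
begin


lemma core_comparison:
  fixes K :: "int set" and D :: "int \<Rightarrow> real \<Rightarrow> real" and C T :: real
  assumes fin: "finite K" and C: "C \<ge> 0" and T: "T \<ge> 0"
    and cont: "\<And>k. k\<in>K \<Longrightarrow> continuous_on {0..T} (D k)"
    and D0: "\<And>k. k\<in>K \<Longrightarrow> D k 0 = 0"
    and drift: "\<And>k r t. k\<in>K \<Longrightarrow> 0 \<le> r \<Longrightarrow> r \<le> t \<Longrightarrow> t \<le> T \<Longrightarrow>
        D k t - D k r \<ge> - C * integral {r..t} (\<lambda>s. \<bar>D k s\<bar> + (\<Sum>m\<in>K. max 0 (- D m s)))"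
  shows "\<And>k t. k\<in>K \<Longrightarrow> 0 \<le> t \<Longrightarrow> t \<le> T \<Longrightarrow> D k t \<ge> 0"
proof -
  define neg where "neg s = (\<Sum>m\<in>K. max 0 (- D m s))" for s
  have negc: "continuous_on {0..T} neg"
    unfolding neg_def by (intro continuous_intros cont)
  have neg_ge: "max 0 (- D k s) \<le> neg s" if "k \<in> K" for k s
    unfolding neg_def using that fin by (intro member_le_sum) auto
  have neg0: "neg s \<ge> 0" for s unfolding neg_def by (intro sum_nonneg) auto
  define h where "h = 1 / (2 * (C + 1) * (real (card K) + 1))"
  have hpos: "h > 0" unfolding h_def using C by auto
  have hq: "2 * C * h * real (card K) < 1"
  proof -
    have "2 * C * h * real (card K) \<le> 2 * C * h * (real (card K) + 1)"
      using C hpos by (intro mult_left_mono) auto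
    also have "\<dots> < 2 * (C + 1) * h * (real (card K) + 1)"
      using hpos by (intro mult_strict_right_mono) auto
    also have "\<dots> = 1"
    proof -
      have "(C + 1) * (real (card K) + 1) > 0" using C by auto
      then show ?thesis unfolding h_def by (simp add: field_simps)
    qed
    finally show ?thesis .
  qed
  have step: "\<forall>k\<in>K. \<forall>u\<in>{0..min T (t0 + h)}. D k u \<ge> 0"
    if t0: "0 \<le> t0" "t0 \<le> T" and prev: "\<forall>k\<in>K. \<forall>u\<in>{0..t0}. D k u \<ge> 0" for t0
  proof -
    define t1 where "t1 = min T (t0 + h)"
    have t1: "t0 \<le> t1" "t1 \<le> T" "t1 - t0 \<le> h" unfolding t1_def using t0 hpos by auto
    have "continuous_on {0..t1} neg" by (rule continuous_on_subset[OF negc]) (use t1 in auto)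
    then obtain us where us: "us \<in> {0..t1}" "\<And>u. u \<in> {0..t1} \<Longrightarrow> neg u \<le> neg us"
      using continuous_attains_sup[of "{0..t1}" neg] t0 t1 by auto
    define M where "M = neg us"
    have M0: "M \<ge> 0" unfolding M_def by (rule neg0)
    have bound: "max 0 (- D k s) \<le> 2 * C * h * M" if k: "k \<in> K" and s: "s \<in> {0..t1}" for k s
    proof (cases "D k s \<ge> 0")
      case True then show ?thesis using C hpos M0 by simp
    next
      case False
      define A where "A = {0..s} \<inter> D k -` {0..}"
      have Dks: "continuous_on {0..s} (D k)" by (rule continuous_on_subset[OF cont[OF k]]) (use s t1 in auto)
      have Acl: "closed A" unfolding A_def by (rule continuous_closed_preimage[OF Dks]) auto
      have t0A: "t0 \<in> A" unfolding A_def using prev k t0 False s by force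
      have Ane: "A \<noteq> {}" using t0A by auto
      have Abdd: "bdd_above A" unfolding A_def by (rule bdd_aboveI[of _ s]) auto
      define r where "r = Sup A"
      have rA: "r \<in> A" unfolding r_def using closed_contains_Sup Ane Abdd Acl by blast
      have r0: "t0 \<le> r" unfolding r_def using t0A Abdd by (rule cSup_upper)
      have rs: "r \<le> s" using rA unfolding A_def by auto
      have Dr: "D k r \<ge> 0" using rA unfolding A_def by auto
      have rlt: "r < s" using rs Dr False by (cases "r = s") auto
      have neg_after: "D k u < 0" if "u \<in> {r<..s}" for u
      proof (rule ccontr)
        assume "\<not> D k u < 0"
        then have "u \<in> A" unfolding A_def using that r0 t0 by auto
        then have "u \<le> r" unfolding r_def using Abdd by (rule cSup_upper)
        then show False using that by auto
      qed
      have Z: "closed ({0..s} \<inter> D k -` {..0})" by (rule continuous_closed_preimage[OF Dks]) auto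
      have "{r<..s} \<subseteq> {0..s} \<inter> D k -` {..0}" using neg_after r0 t0 by fastforce
      then have "closure {r<..s} \<subseteq> {0..s} \<inter> D k -` {..0}" using Z by (rule closure_minimal)
      then have nonpos: "D k u \<le> 0" if "u \<in> {r..s}" for u using that rlt by auto
      have ibound: "\<bar>D k u\<bar> + neg u \<le> 2 * M" if "u \<in> {r..s}" for u
      proof -
        have "\<bar>D k u\<bar> = max 0 (- D k u)" using nonpos[OF that] by auto
        also have "\<dots> \<le> neg u" by (rule neg_ge[OF k])
        finally have "\<bar>D k u\<bar> \<le> neg u" .
        moreover have "neg u \<le> M" unfolding M_def using that us r0 t0 s by (intro us(2)) auto
        ultimately show ?thesis by auto
      qed
      have icont: "continuous_on {r..s} (\<lambda>u. \<bar>D k u\<bar> + neg u)"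
      proof -
        have "{r..s} \<subseteq> {0..T}" using r0 t0 s t1 by auto
        then have "continuous_on {r..s} (D k)" "continuous_on {r..s} neg"
          using continuous_on_subset[OF cont[OF k]] continuous_on_subset[OF negc] by auto
        then show ?thesis by (intro continuous_intros)
      qed
      have "norm (integral {r..s} (\<lambda>u. \<bar>D k u\<bar> + neg u)) \<le> 2 * M * (s - r)"
        using rs icont by (rule integral_bound) (use ibound neg0 in auto)
      then have I: "integral {r..s} (\<lambda>u. \<bar>D k u\<bar> + neg u) \<le> 2 * M * (s - r)" by auto
      have dr: "D k s - D k r \<ge> - C * integral {r..s} (\<lambda>u. \<bar>D k u\<bar> + neg u)"
        using drift[OF k, of r s] r0 t0 rs s t1 unfolding neg_def by auto
      have "C * integral {r..s} (\<lambda>u. \<bar>D k u\<bar> + neg u) \<le> C * (2 * M * (s - r))"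
        using I C by (rule mult_left_mono)
      also have "\<dots> \<le> C * (2 * M * h)" using C M0 t1 r0 s
        by (intro mult_left_mono) auto
      moreover have "0 \<le> C * (M * h)" using C M0 hpos by auto
      ultimately show ?thesis using dr Dr by (auto simp: algebra_simps)
    qed
    have negb: "neg s \<le> real (card K) * (2 * C * h * M)" if "s \<in> {0..t1}" for s
      unfolding neg_def using sum_bounded_above[of K "\<lambda>m. max 0 (- D m s)" "2 * C * h * M"] bound that
      by auto
    have "M \<le> (2 * C * h * real (card K)) * M" using negb[OF us(1)] unfolding M_def by (simp add: algebra_simps)
    then have "(1 - 2 * C * h * real (card K)) * M \<le> 0" by (simp add: algebra_simps)
    then have "M \<le> 0" using hq by (simp add: mult_le_0_iff)
    then have M00: "M = 0" using M0 by auto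
    show ?thesis
    proof (intro ballI)
      fix k u assume k: "k \<in> K" and u: "u \<in> {0..min T (t0 + h)}"
      have "max 0 (- D k u) \<le> neg u" by (rule neg_ge[OF k])
      also have "\<dots> \<le> M" unfolding M_def using u by (intro us(2)) (auto simp: t1_def)
      finally show "D k u \<ge> 0" using M00 by auto
    qed
  qed
  have ind: "\<forall>k\<in>K. \<forall>u\<in>{0..min T (real n * h)}. D k u \<ge> 0" for n :: nat
  proof (induction n)
    case 0 then show ?case using D0 T by auto
  next
    case (Suc n)
    have e: "min T (min T (real n * h) + h) = min T (real (Suc n) * h)"
      using hpos by (auto simp: algebra_simps min_def)
    show ?case using step[of "min T (real n * h)"] Suc T hpos unfolding e by auto
  qed
  fix k t assume k: "k \<in> K" and t: "0 \<le> t" "t \<le> T"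
  obtain n :: nat where n: "T / h \<le> real n" using real_arch_simple by blast
  then have "T \<le> real n * h" using hpos by (simp add: field_simps)
  then show "D k t \<ge> 0" using ind[of n] k t by auto
qed



definition Fd :: "int set \<Rightarrow> (int \<Rightarrow> real) \<Rightarrow> int \<Rightarrow> real" where
  "Fd L x k = (1/2) * ((\<Sum>j\<in>L-{k+1}. 1/(x (k+1) - x j)) - (\<Sum>j\<in>L-{k}. 1/(x k - x j)))"

definition tm :: "(int \<Rightarrow> real) \<Rightarrow> int \<Rightarrow> int \<Rightarrow> real" where
  "tm x k j = 1/(x (k+1) - x j) - 1/(x k - x j)"

lemma Fd_split:
  assumes "finite V" "k \<in> V" "k + 1 \<in> V"
  shows "Fd V x k = 1/(x (k+1) - x k) + (1/2) * (\<Sum>j\<in>V-{k,k+1}. tm x k j)"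
proof -
  have e1: "V - {k+1} = insert k (V - {k,k+1})" using assms by auto
  have e2: "V - {k} = insert (k+1) (V - {k,k+1})" using assms by auto
  have n: "1/(x k - x (k+1)) = - (1/(x (k+1) - x k))"
    by (metis minus_diff_eq divide_minus_right)
  have n1: "k \<notin> V - {k,k+1}" "k+1 \<notin> V - {k,k+1}" by auto
  have f: "finite (V - {k,k+1})" using assms by auto
  have s1: "(\<Sum>j\<in>V-{k+1}. 1/(x (k+1) - x j)) = 1/(x (k+1) - x k) + (\<Sum>j\<in>V-{k,k+1}. 1/(x (k+1) - x j))"
    unfolding e1 by (rule sum.insert[OF f n1(1)])
  have s2: "(\<Sum>j\<in>V-{k}. 1/(x k - x j)) = - (1/(x (k+1) - x k)) + (\<Sum>j\<in>V-{k,k+1}. 1/(x k - x j))"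
    unfolding e2 sum.insert[OF f n1(2)] n ..
  show ?thesis unfolding Fd_def tm_def s1 s2 sum_subtractf by (simp add: algebra_simps)
qed

lemma tm_nonpos:
  assumes "x k < x (k+1)" "j > k + 1 \<Longrightarrow> x (k+1) < x j" "j < k \<Longrightarrow> x j < x k" "j \<noteq> k" "j \<noteq> k + 1"
  shows "tm x k j \<le> 0"
proof (cases "j > k + 1")
  case True
  then have a: "x (k+1) < x j" using assms by auto
  have "1/(x (k+1) - x j) \<le> 1/(x k - x j)"
    using a assms(1) by (simp add: divide_simps)
  then show ?thesis unfolding tm_def by simp
next
  case False
  then have "j < k" using assms by auto
  then have a: "x j < x k" using assms by auto
  have "1/(x (k+1) - x j) \<le> 1/(x k - x j)"
    using a assms(1) by (simp add: divide_simps)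
  then show ?thesis unfolding tm_def by simp
qed

definition incr_on :: "int set \<Rightarrow> (int \<Rightarrow> real) \<Rightarrow> bool" where
  "incr_on V x \<longleftrightarrow> (\<forall>i\<in>V. \<forall>j\<in>V. i < j \<longrightarrow> x i < x j)"

lemma Fd_mono:
  assumes "finite V" "L \<subseteq> V" "k \<in> L" "k + 1 \<in> L" "incr_on V x"
  shows "Fd V x k \<le> Fd L x k"
proof -
  have fL: "finite L" using assms finite_subset by blast
  have sub: "L - {k,k+1} \<subseteq> V - {k,k+1}" using assms by auto
  have "(\<Sum>j\<in>V-{k,k+1}. tm x k j) = (\<Sum>j\<in>L-{k,k+1}. tm x k j) + (\<Sum>j\<in>(V-{k,k+1})-(L-{k,k+1}). tm x k j)"
    using sum.subset_diff[OF sub] assms by (simp add: add.commute)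
  moreover have "(\<Sum>j\<in>(V-{k,k+1})-(L-{k,k+1}). tm x k j) \<le> 0"
  proof (intro sum_nonpos)
    fix j assume j: "j \<in> (V-{k,k+1})-(L-{k,k+1})"
    have kV: "k \<in> V" "k+1 \<in> V" using assms by auto
    have jV: "j \<in> V" using j by auto
    have I: "\<And>i j. i \<in> V \<Longrightarrow> j \<in> V \<Longrightarrow> i < j \<Longrightarrow> x i < x j" using assms(5) unfolding incr_on_def by blast
    show "tm x k j \<le> 0"
      using I[OF kV(1) kV(2)] I[OF kV(2) jV] I[OF jV kV(1)] j by (intro tm_nonpos) auto
  qed
  ultimately have "(\<Sum>j\<in>V-{k,k+1}. tm x k j) \<le> (\<Sum>j\<in>L-{k,k+1}. tm x k j)" by linarith
  moreover have "Fd V x k = 1/(x (k+1) - x k) + (1/2) * (\<Sum>j\<in>V-{k,k+1}. tm x k j)"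
    using Fd_split[OF assms(1)] assms by blast
  moreover have "Fd L x k = 1/(x (k+1) - x k) + (1/2) * (\<Sum>j\<in>L-{k,k+1}. tm x k j)"
    using Fd_split[OF fL] assms by blast
  ultimately show ?thesis by linarith
qed

lemma phi_le_Fd:
  assumes "Wconf x" "convergent (phi_partial x k)" "convergent (phi_partial x (k+1))"
    and "L = {a..b}" "k \<in> L" "k + 1 \<in> L"
  shows "phi x (k+1) - phi x k \<le> Fd L x k"
proof -
  have mono: "x i < x j" if "i < j" for i j
  proof -
    have "\<forall>n::nat. x i < x (i + 1 + int n)"
    proof
      fix n :: nat show "x i < x (i + 1 + int n)"
      proof (induction n)
        case 0 then show ?case using assms(1) unfolding Wconf_def by simp
      next
        case (Suc n)
        have "x (i + 1 + int n) < x (i + 1 + int n + 1)" using assms(1) unfolding Wconf_def by blast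
        then show ?case using Suc by (simp add: add.assoc)
      qed
    qed
    from this[rule_format, of "nat (j - i - 1)"] show ?thesis using that by simp
  qed
  have ev: "phi_partial x (k+1) m - phi_partial x k m \<le> 2 * Fd L x k"
    if m: "m \<ge> nat (b - a) + 1" for m :: nat
  proof -
    define U where "U = {k+1 - int m..k + int m}"
    have fU: "finite U" unfolding U_def by auto
    have LU: "L \<subseteq> U" using assms m unfolding U_def by auto
    have kU: "k \<in> U" "k + 1 \<in> U" using LU assms by auto
    have e1: "{k + 1 - int m..k + 1 + int m} - {k+1} = insert (k + 1 + int m) (U - {k+1})"
      unfolding U_def using m by auto
    have e2: "{k - int m..k + int m} - {k} = insert (k - int m) (U - {k})"
      unfolding U_def using m by auto
    have n1: "k + 1 + int m \<notin> U - {k+1}" unfolding U_def by auto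
    have n2: "k - int m \<notin> U - {k}" unfolding U_def using m by auto
    have "phi_partial x (k+1) m - phi_partial x k m
        = 2 * Fd U x k + 1/(x (k+1) - x (k + 1 + int m)) - 1/(x k - x (k - int m))"
    proof -
      have fu1: "finite (U - {k+1})" "finite (U - {k})" using fU by auto
      show ?thesis
        unfolding phi_partial_def Fd_def e1 e2 sum.insert[OF fu1(1) n1] sum.insert[OF fu1(2) n2]
        by (simp add: algebra_simps)
    qed
    moreover have "1/(x (k+1) - x (k + 1 + int m)) \<le> 0"
      using mono[of "k+1" "k + 1 + int m"] m by (simp add: divide_simps)
    moreover have "1/(x k - x (k - int m)) \<ge> 0"
      using mono[of "k - int m" k] m by (simp add: divide_simps)
    moreover have "Fd U x k \<le> Fd L x k"
      using Fd_mono[OF fU LU assms(5,6)] mono unfolding incr_on_def by auto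
    ultimately show ?thesis by linarith
  qed
  have t1: "phi_partial x (k+1) \<longlonglongrightarrow> lim (phi_partial x (k+1))"
    using assms(3) by (simp add: convergent_LIMSEQ_iff)
  have t0: "phi_partial x k \<longlonglongrightarrow> lim (phi_partial x k)"
    using assms(2) by (simp add: convergent_LIMSEQ_iff)
  have "(\<lambda>m. phi_partial x (k+1) m - phi_partial x k m) \<longlonglongrightarrow> lim (phi_partial x (k+1)) - lim (phi_partial x k)"
    by (rule tendsto_diff[OF t1 t0])
  then have "lim (phi_partial x (k+1)) - lim (phi_partial x k) \<le> 2 * Fd L x k"
    by (rule LIMSEQ_le_const2) (use ev in auto)
  then show ?thesis unfolding phi_def by simp
qed



lemma recip_diff:
  fixes u v c :: real
  assumes "c > 0" "u \<ge> c" "v \<ge> c"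
  shows "\<bar>1/u - 1/v\<bar> \<le> \<bar>u - v\<bar> / c^2"
proof -
  have up: "u > 0" "v > 0" using assms by auto
  have "1/u - 1/v = (v - u) / (u * v)" using up by (simp add: field_simps)
  then have "\<bar>1/u - 1/v\<bar> = \<bar>u - v\<bar> / (u * v)" using up by (simp add: abs_minus_commute)
  also have "\<dots> \<le> \<bar>u - v\<bar> / c^2"
  proof (rule divide_left_mono)
    show "c^2 \<le> u * v" unfolding power2_eq_square using assms by (intro mult_mono) auto
  qed (use assms in auto)
  finally show ?thesis .
qed

lemma f_bound:
  fixes A1 A2 g1 g2 c :: real
  assumes c: "c > 0" and "A1 \<ge> c" "A2 \<ge> c" "g1 \<ge> c" "g2 \<ge> c"
  shows "(1/(A1+g1) - 1/A1) - (1/(A2+g2) - 1/A2) \<ge> - (2/c^2) * max 0 (A2 - A1) - (1/c^2) * \<bar>g1 - g2\<bar>"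
proof -
  have p1: "\<bar>1/(A1+g1) - 1/(A1+g2)\<bar> \<le> \<bar>g1 - g2\<bar> / c^2"
    using recip_diff[of c "A1+g1" "A1+g2"] assms by auto
  have p2: "(1/(A1+g2) - 1/A1) - (1/(A2+g2) - 1/A2) \<ge> - (2/c^2) * max 0 (A2 - A1)"
  proof (cases "A1 \<ge> A2")
    case True
    have "g2 / (A1 * (A1 + g2)) \<le> g2 / (A2 * (A2 + g2))"
      using assms True by (intro divide_left_mono mult_mono) auto
    moreover have "1/(A1+g2) - 1/A1 = - (g2 / (A1 * (A1 + g2)))" using assms by (simp add: field_simps)
    moreover have "1/(A2+g2) - 1/A2 = - (g2 / (A2 * (A2 + g2)))" using assms by (simp add: field_simps)
    ultimately show ?thesis using True by simp
  next
    case False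
    have q1: "\<bar>1/(A1+g2) - 1/(A2+g2)\<bar> \<le> \<bar>A1 - A2\<bar> / c^2"
      using recip_diff[of c "A1+g2" "A2+g2"] assms by auto
    have q2: "\<bar>1/A1 - 1/A2\<bar> \<le> \<bar>A1 - A2\<bar> / c^2"
      using recip_diff[of c A1 A2] assms by auto
    have "(2/c^2) * max 0 (A2 - A1) = 2 * (\<bar>A1 - A2\<bar> / c^2)" using False by auto
    then show ?thesis using q1 q2 unfolding abs_le_iff by linarith
  qed
  have "1/c^2 * \<bar>g1 - g2\<bar> = \<bar>g1 - g2\<bar> / c^2" by simp
  then show ?thesis using p1 p2 by (auto simp: abs_le_iff)
qed

lemma neg_recip_swap: "1 / - (a::real) - 1 / b = 1 / - b - 1 / a"
  by (simp add: divide_minus_right)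

lemma tele:
  fixes x :: "int \<Rightarrow> real"
  assumes "i \<le> j"
  shows "x j - x i = (\<Sum>m\<in>{i..<j}. x (m+1) - x m)"
  using assms
proof (induction j rule: int_ge_induct)
  case base then show ?case by simp
next
  case (step j)
  have e: "{i..<j+1} = insert j {i..<j}" using step by auto
  show ?case unfolding e using step by simp
qed

lemma Fd_lower:
  fixes L :: "int set" and x y D :: "int \<Rightarrow> real" and c :: real
  assumes L: "L = {a..b}" and c: "c > 0"
    and gx: "\<And>i. a \<le> i \<Longrightarrow> i < b \<Longrightarrow> x (i+1) - x i \<ge> c"
    and gy: "\<And>i. a \<le> i \<Longrightarrow> i < b \<Longrightarrow> y (i+1) - y i \<ge> c"
    and D: "\<And>m. D m = (y (m+1) - y m) - (x (m+1) - x m)"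
    and k: "a \<le> k" "k < b"
  shows "Fd L y k - Fd L x k \<ge> - ((1 + real (card L)) / c^2) * (\<bar>D k\<bar> + (\<Sum>m\<in>{a..<b}. max 0 (- D m)))"
proof -
  define N where "N = (\<Sum>m\<in>{a..<b}. max 0 (- D m))"
  have N0: "N \<ge> 0" unfolding N_def by (intro sum_nonneg) auto
  have dist: "z j - z i \<ge> c" if gz: "\<And>i. a \<le> i \<Longrightarrow> i < b \<Longrightarrow> z (i+1) - z i \<ge> c"
    and ij: "a \<le> i" "i < j" "j \<le> b" for z :: "int \<Rightarrow> real" and i j
  proof -
    have "z j - z i = (\<Sum>m\<in>{i..<j}. z (m+1) - z m)" using ij by (intro tele) auto
    also have "\<dots> \<ge> z (i+1) - z i"
    proof (rule member_le_sum)
      fix m assume "m \<in> {i..<j} - {i}"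
      then have "a \<le> m" "m < b" using ij by auto
      from gz[OF this] c show "0 \<le> z (m+1) - z m" by linarith
    qed (use ij in auto)
    finally show ?thesis using gz ij by force
  qed
  have ddiff: "(x j - x i) - (y j - y i) \<le> N" if ij: "a \<le> i" "i \<le> j" "j \<le> b" for i j
  proof -
    have "(x j - x i) - (y j - y i) = (\<Sum>m\<in>{i..<j}. - D m)"
      using tele[of i j x] tele[of i j y] ij by (simp add: D sum_subtractf)
    also have "\<dots> \<le> (\<Sum>m\<in>{i..<j}. max 0 (- D m))" by (intro sum_mono) auto
    also have "\<dots> \<le> N" unfolding N_def using ij by (intro sum_mono2) auto
    finally show ?thesis .
  qed
  have gk: "x (k+1) - x k \<ge> c" "y (k+1) - y k \<ge> c" using gx gy k by auto
  have tmb: "tm y k j - tm x k j \<ge> - (2/c^2) * N - (1/c^2) * \<bar>D k\<bar>" if j: "j \<in> L - {k,k+1}" for j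
  proof (cases "j > k + 1")
    case True
    have fz: "tm z k j = 1/((z j - z (k+1)) + (z (k+1) - z k)) - 1/(z j - z (k+1))" for z :: "int \<Rightarrow> real"
    proof -
      have e: "(z j - z (k+1)) + (z (k+1) - z k) = -(z k - z j)" by simp
      have e2: "z (k+1) - z j = - (z j - z (k+1))" by simp
      show ?thesis unfolding e tm_def by (subst e2) (rule neg_recip_swap)
    qed
    have Ax: "x j - x (k+1) \<ge> c" using dist[of x, OF gx, of "k+1" j] True j L k by auto
    have Ay: "y j - y (k+1) \<ge> c" using dist[of y, OF gy, of "k+1" j] True j L k by auto
    have "max 0 ((x j - x (k+1)) - (y j - y (k+1))) \<le> N"
      using ddiff[of "k+1" j] N0 True j L k by auto
    moreover have "\<bar>(y (k+1) - y k) - (x (k+1) - x k)\<bar> = \<bar>D k\<bar>" using D by simp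
    moreover have "tm y k j - tm x k j \<ge> - (2/c^2) * max 0 ((x j - x (k+1)) - (y j - y (k+1)))
                     - (1/c^2) * \<bar>(y (k+1) - y k) - (x (k+1) - x k)\<bar>"
      unfolding fz[of x] fz[of y] using Ax Ay c gk by (intro f_bound) auto
    moreover have "(2/c^2) * max 0 ((x j - x (k+1)) - (y j - y (k+1))) \<le> (2/c^2) * N"
      using calculation(1) by (intro mult_left_mono) auto
    ultimately show ?thesis by (smt (verit) mult_minus_left)
  next
    case False
    then have jk: "j < k" using j by auto
    have fz: "tm z k j = 1/((z k - z j) + (z (k+1) - z k)) - 1/(z k - z j)" for z :: "int \<Rightarrow> real"
      unfolding tm_def by simp
    have Ax: "x k - x j \<ge> c" using dist[of x, OF gx, of j k] jk j L k by auto
    have Ay: "y k - y j \<ge> c" using dist[of y, OF gy, of j k] jk j L k by auto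
    have "max 0 ((x k - x j) - (y k - y j)) \<le> N"
      using ddiff[of j k] N0 jk j L k by auto
    moreover have "\<bar>(y (k+1) - y k) - (x (k+1) - x k)\<bar> = \<bar>D k\<bar>" using D by simp
    moreover have "tm y k j - tm x k j \<ge> - (2/c^2) * max 0 ((x k - x j) - (y k - y j))
                     - (1/c^2) * \<bar>(y (k+1) - y k) - (x (k+1) - x k)\<bar>"
      unfolding fz[of x] fz[of y] using Ax Ay c gk by (intro f_bound) auto
    moreover have "(2/c^2) * max 0 ((x k - x j) - (y k - y j)) \<le> (2/c^2) * N"
      using calculation(1) by (intro mult_left_mono) auto
    ultimately show ?thesis by (smt (verit) mult_minus_left)
  qed
  have fL: "finite L" "k \<in> L" "k+1 \<in> L" using L k by auto
  define S where "S = L - {k,k+1}"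
  have cS: "real (card S) \<le> real (card L)" unfolding S_def using fL by (intro of_nat_mono card_mono) auto
  have sumb: "real (card S) * (- (2/c^2) * N - (1/c^2) * \<bar>D k\<bar>) \<le> (\<Sum>j\<in>S. tm y k j - tm x k j)"
    by (rule sum_bounded_below) (use tmb S_def in auto)
  have r: "1/(y (k+1) - y k) - 1/(x (k+1) - x k) \<ge> - (\<bar>D k\<bar> / c^2)"
    using recip_diff[of c "y (k+1) - y k" "x (k+1) - x k"] gk c D by (auto simp: abs_le_iff)
  have eq: "Fd L y k - Fd L x k = (1/(y (k+1) - y k) - 1/(x (k+1) - x k)) + (1/2) * (\<Sum>j\<in>S. tm y k j - tm x k j)"
    unfolding Fd_split[OF fL] S_def sum_subtractf by (simp add: algebra_simps)
  define e where "e = 1/c^2"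
  have e0: "e \<ge> 0" unfolding e_def by simp
  have "- ((1 + real (card L)) / c^2) * (\<bar>D k\<bar> + N) = - (1 + real (card L)) * e * (\<bar>D k\<bar> + N)"
    unfolding e_def using c by (simp add: field_simps)
  also have "\<dots> \<le> - (e * \<bar>D k\<bar>) + (1/2) * (real (card S) * (- (2 * e) * N - e * \<bar>D k\<bar>))"
  proof -
    have "real (card S) * e * N \<le> real (card L) * e * N"
      using cS e0 N0 by (intro mult_right_mono) auto
    moreover have "real (card S) * e * \<bar>D k\<bar> \<le> real (card L) * e * \<bar>D k\<bar>"
      using cS e0 by (intro mult_right_mono) auto
    moreover have "0 \<le> e * N" using e0 N0 by auto
    moreover have "0 \<le> real (card S) * e * \<bar>D k\<bar>" using e0 by auto
    ultimately show ?thesis by (simp add: algebra_simps)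
  qed
  also have "\<dots> \<le> Fd L y k - Fd L x k"
    unfolding eq using r sumb unfolding e_def by (simp add: algebra_simps)
  finally show ?thesis unfolding N_def .
qed



lemma sbm_of_si: "set_integrable lborel A g \<Longrightarrow> set_borel_measurable lborel A (g :: real \<Rightarrow> real)"
  unfolding set_integrable_def set_borel_measurable_def by (rule borel_measurable_integrable)

lemma lint_split:
  fixes g :: "real \<Rightarrow> real"
  assumes g: "set_integrable lborel {0..t} g" and r: "0 \<le> r" "r \<le> t"
  shows "(LINT s:{0..t}|lborel. g s) - (LINT s:{0..r}|lborel. g s) = (LINT s:{r..t}|lborel. g s)"
proof -
  have i1: "set_integrable lborel {0..r} g" by (rule set_integrable_subset[OF g]) (use r in auto)
  have i2: "set_integrable lborel {r<..t} g" by (rule set_integrable_subset[OF g]) (use r in auto)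
  have i3: "set_integrable lborel {r..t} g" by (rule set_integrable_subset[OF g]) (use r in auto)
  have u: "{0..t} = {0..r} \<union> {r<..t}" using r by auto
  have "(LINT s:{0..t}|lborel. g s) = (LINT s:{0..r}|lborel. g s) + (LINT s:{r<..t}|lborel. g s)"
    unfolding u by (rule set_integral_Un) (use i1 i2 in auto)
  moreover have "(LINT s:{r<..t}|lborel. g s) = (LINT s:{r..t}|lborel. g s)"
  proof (rule set_integral_cong_set)
    show "set_borel_measurable lborel {r..t} g" by (rule sbm_of_si[OF i3])
    show "set_borel_measurable lborel {r<..t} g" by (rule sbm_of_si[OF i2])
    show "AE x in lborel. (x \<in> {r..t}) = (x \<in> {r<..t})"
      using AE_lborel_singleton[of r] by eventually_elim auto
  qed
  ultimately show ?thesis by simp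
qed

lemma lint0:
  fixes g :: "real \<Rightarrow> real"
  assumes g: "set_integrable lborel {0..0} g"
  shows "(LINT s:{0..0}|lborel. g s) = 0"
proof -
  have "(LINT s:{}|lborel. g s) = (LINT s:{0..0}|lborel. g s)"
  proof (rule set_integral_cong_set)
    show "set_borel_measurable lborel {0..0} g" by (rule sbm_of_si[OF g])
    show "set_borel_measurable lborel {} g" unfolding set_borel_measurable_def by simp
    show "AE x in lborel. ((x::real) \<in> {0..0}) = (x \<in> {})"
      using AE_lborel_singleton[of "0::real"] by eventually_elim auto
  qed
  then show ?thesis by (simp add: set_lebesgue_integral_def)
qed

lemma si_cont:
  fixes f :: "real \<Rightarrow> real"
  assumes "continuous_on {a..b} f"
  shows "set_integrable lborel {a..b} f"
  unfolding set_integrable_def using borel_integrable_compact[OF compact_Icc assms] by simp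

lemma drift_lemma:
  fixes Q1 Q0 P1 P0 hQ1 hQ0 hP1 hP0 FQ FP W1 W0 :: "real \<Rightarrow> real" and x1 x0 \<beta> T :: real
  assumes q1: "\<And>t. t \<in> {0..T} \<Longrightarrow> set_integrable lborel {0..t} hQ1 \<and> Q1 t = x1 + W1 t + \<beta> * (LINT s:{0..t}|lborel. hQ1 s)"
    and q0: "\<And>t. t \<in> {0..T} \<Longrightarrow> set_integrable lborel {0..t} hQ0 \<and> Q0 t = x0 + W0 t + \<beta> * (LINT s:{0..t}|lborel. hQ0 s)"
    and p1: "\<And>t. t \<in> {0..T} \<Longrightarrow> set_integrable lborel {0..t} hP1 \<and> P1 t = x1 + W1 t + \<beta> * (LINT s:{0..t}|lborel. hP1 s)"
    and p0: "\<And>t. t \<in> {0..T} \<Longrightarrow> set_integrable lborel {0..t} hP0 \<and> P0 t = x0 + W0 t + \<beta> * (LINT s:{0..t}|lborel. hP0 s)"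
    and hq: "\<And>s. s \<in> {0..T} \<Longrightarrow> hQ1 s - hQ0 s = FQ s"
    and hp: "\<And>s. s \<in> {0..T} \<Longrightarrow> hP1 s - hP0 s \<le> FP s"
    and cQ: "continuous_on {0..T} FQ" and cP: "continuous_on {0..T} FP" and \<beta>: "\<beta> \<ge> 0" and T: "T \<ge> 0"
  shows "(Q1 0 - Q0 0) - (P1 0 - P0 0) = 0"
    and "\<And>r t. 0 \<le> r \<Longrightarrow> r \<le> t \<Longrightarrow> t \<le> T \<Longrightarrow>
          ((Q1 t - Q0 t) - (P1 t - P0 t)) - ((Q1 r - Q0 r) - (P1 r - P0 r)) \<ge> \<beta> * integral {r..t} (\<lambda>s. FQ s - FP s)"
proof -
  define dQ where "dQ s = hQ1 s - hQ0 s" for s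
  define dP where "dP s = hP1 s - hP0 s" for s
  have iQ: "set_integrable lborel {0..t} dQ" if "t \<in> {0..T}" for t
    unfolding dQ_def using q1[OF that] q0[OF that] by auto
  have iP: "set_integrable lborel {0..t} dP" if "t \<in> {0..T}" for t
    unfolding dP_def using p1[OF that] p0[OF that] by auto
  have Deq: "(Q1 t - Q0 t) - (P1 t - P0 t) = \<beta> * ((LINT s:{0..t}|lborel. dQ s) - (LINT s:{0..t}|lborel. dP s))"
    if t: "t \<in> {0..T}" for t
  proof -
    have e1: "(LINT s:{0..t}|lborel. dQ s) = (LINT s:{0..t}|lborel. hQ1 s) - (LINT s:{0..t}|lborel. hQ0 s)"
      unfolding dQ_def using q1[OF t] q0[OF t] by (intro set_integral_diff) auto
    have e2: "(LINT s:{0..t}|lborel. dP s) = (LINT s:{0..t}|lborel. hP1 s) - (LINT s:{0..t}|lborel. hP0 s)"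
      unfolding dP_def using p1[OF t] p0[OF t] by (intro set_integral_diff) auto
    show ?thesis unfolding e1 e2 using q1[OF t] q0[OF t] p1[OF t] p0[OF t] by (simp add: algebra_simps)
  qed
  have T0: "0 \<in> {0..T}" using T by auto
  show "(Q1 0 - Q0 0) - (P1 0 - P0 0) = 0"
    unfolding Deq[OF T0] using lint0[OF iQ[OF T0]] lint0[OF iP[OF T0]] by simp
  fix r t assume r: "0 \<le> r" "r \<le> t" "t \<le> T"
  have rT: "r \<in> {0..T}" "t \<in> {0..T}" using r by auto
  have sub: "{r..t} \<subseteq> {0..T}" using r by auto
  have cQ': "continuous_on {r..t} FQ" using continuous_on_subset[OF cQ sub] .
  have cP': "continuous_on {r..t} FP" using continuous_on_subset[OF cP sub] .
  have siQ: "set_integrable lborel {r..t} FQ" by (rule si_cont[OF cQ'])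
  have siP: "set_integrable lborel {r..t} FP" by (rule si_cont[OF cP'])
  have siD: "set_integrable lborel {r..t} dP" by (rule set_integrable_subset[OF iP[OF rT(2)]]) (use r in auto)
  have "(LINT s:{0..t}|lborel. dQ s) - (LINT s:{0..r}|lborel. dQ s) = (LINT s:{r..t}|lborel. dQ s)"
    using lint_split[OF iQ[OF rT(2)] r(1,2)] .
  also have "\<dots> = (LINT s:{r..t}|lborel. FQ s)"
    using hq sub unfolding dQ_def by (intro set_lebesgue_integral_cong) auto
  finally have A: "(LINT s:{0..t}|lborel. dQ s) - (LINT s:{0..r}|lborel. dQ s) = (LINT s:{r..t}|lborel. FQ s)" .
  have "(LINT s:{0..t}|lborel. dP s) - (LINT s:{0..r}|lborel. dP s) = (LINT s:{r..t}|lborel. dP s)"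
    using lint_split[OF iP[OF rT(2)] r(1,2)] .
  also have "\<dots> \<le> (LINT s:{r..t}|lborel. FP s)"
    using hp sub unfolding dP_def by (intro set_integral_mono siD[unfolded dP_def] siP) auto
  finally have B: "(LINT s:{0..t}|lborel. dP s) - (LINT s:{0..r}|lborel. dP s) \<le> (LINT s:{r..t}|lborel. FP s)" .
  have C: "(LINT s:{r..t}|lborel. FQ s) - (LINT s:{r..t}|lborel. FP s) = integral {r..t} (\<lambda>s. FQ s - FP s)"
  proof -
    have "(LINT s:{r..t}|lborel. FQ s) - (LINT s:{r..t}|lborel. FP s) = (LINT s:{r..t}|lborel. FQ s - FP s)"
      using siQ siP by (simp add: set_integral_diff)
    also have "\<dots> = integral {r..t} (\<lambda>s. FQ s - FP s)"
      by (rule set_borel_integral_eq_integral(2)) (use siQ siP in auto)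
    finally show ?thesis .
  qed
  have "\<beta> * integral {r..t} (\<lambda>s. FQ s - FP s)
      \<le> \<beta> * (((LINT s:{0..t}|lborel. dQ s) - (LINT s:{0..r}|lborel. dQ s))
             - ((LINT s:{0..t}|lborel. dP s) - (LINT s:{0..r}|lborel. dP s)))"
    using A B C \<beta> by (intro mult_left_mono) auto
  also have "\<dots> = ((Q1 t - Q0 t) - (P1 t - P0 t)) - ((Q1 r - Q0 r) - (P1 r - P0 r))"
    unfolding Deq[OF rT(1)] Deq[OF rT(2)] by (simp add: algebra_simps)
  finally show "((Q1 t - Q0 t) - (P1 t - P0 t)) - ((Q1 r - Q0 r) - (P1 r - P0 r)) \<ge> \<beta> * integral {r..t} (\<lambda>s. FQ s - FP s)" .
qed



lemma contFd:
  fixes Q :: "int \<Rightarrow> real \<Rightarrow> real"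
  assumes fin: "finite L" and m: "m \<in> L" "m + 1 \<in> L"
    and cont: "\<And>i. i \<in> L \<Longrightarrow> continuous_on S (Q i)"
    and ord: "\<And>i j s. i \<in> L \<Longrightarrow> j \<in> L \<Longrightarrow> i < j \<Longrightarrow> s \<in> S \<Longrightarrow> Q i s < Q j s"
  shows "continuous_on S (\<lambda>s. Fd L (\<lambda>i. Q i s) m)"
proof -
  have ne: "Q i s - Q j s \<noteq> 0" if "i \<in> L" "j \<in> L" "i \<noteq> j" "s \<in> S" for i j s
  proof (cases "i < j")
    case True then show ?thesis using ord[of i j s] that by auto
  next
    case False then have "j < i" using that by auto
    then show ?thesis using ord[of j i s] that by auto
  qed
  have c1: "continuous_on S (\<lambda>s. \<Sum>j\<in>L-{m+1}. 1/(Q (m+1) s - Q j s))"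
    by (intro continuous_on_sum continuous_on_divide continuous_on_const continuous_on_diff cont)
       (use m ne in auto)
  have c2: "continuous_on S (\<lambda>s. \<Sum>j\<in>L-{m}. 1/(Q m s - Q j s))"
    by (intro continuous_on_sum continuous_on_divide continuous_on_const continuous_on_diff cont)
       (use m ne in auto)
  show ?thesis unfolding Fd_def by (intro continuous_on_mult continuous_on_const continuous_on_diff c1 c2)
qed

lemma window_compare:
  fixes Q P hQ hP W :: "int \<Rightarrow> real \<Rightarrow> real" and x0 :: "int \<Rightarrow> real" and a b k :: int and \<beta> T t :: real
  assumes \<beta>: "\<beta> \<ge> 0" and T: "T \<ge> 0"
    and contQ: "\<And>i. i \<in> {a..b} \<Longrightarrow> continuous_on {0..T} (Q i)"
    and contP: "\<And>i. i \<in> {a..b} \<Longrightarrow> continuous_on {0..T} (P i)"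
    and ordQ: "\<And>i j s. i \<in> {a..b} \<Longrightarrow> j \<in> {a..b} \<Longrightarrow> i < j \<Longrightarrow> s \<in> {0..T} \<Longrightarrow> Q i s < Q j s"
    and ordP: "\<And>i j s. i \<in> {a..b} \<Longrightarrow> j \<in> {a..b} \<Longrightarrow> i < j \<Longrightarrow> s \<in> {0..T} \<Longrightarrow> P i s < P j s"
    and eqQ: "\<And>i t. i \<in> {a..b} \<Longrightarrow> t \<in> {0..T} \<Longrightarrow>
        set_integrable lborel {0..t} (hQ i) \<and> Q i t = x0 i + W i t + \<beta> * (LINT s:{0..t}|lborel. hQ i s)"
    and eqP: "\<And>i t. i \<in> {a..b} \<Longrightarrow> t \<in> {0..T} \<Longrightarrow>
        set_integrable lborel {0..t} (hP i) \<and> P i t = x0 i + W i t + \<beta> * (LINT s:{0..t}|lborel. hP i s)"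
    and hQF: "\<And>k s. a \<le> k \<Longrightarrow> k < b \<Longrightarrow> s \<in> {0..T} \<Longrightarrow> hQ (k+1) s - hQ k s = Fd {a..b} (\<lambda>i. Q i s) k"
    and hPF: "\<And>k s. a \<le> k \<Longrightarrow> k < b \<Longrightarrow> s \<in> {0..T} \<Longrightarrow> hP (k+1) s - hP k s \<le> Fd {a..b} (\<lambda>i. P i s) k"
    and k: "a \<le> k" "k < b" and t: "t \<in> {0..T}"
  shows "P (k+1) t - P k t \<le> Q (k+1) t - Q k t"
proof -
  define K where "K = {a..<b}"
  define L where "L = {a..b}"
  have finK: "finite K" and finL: "finite L" unfolding K_def L_def by auto
  define D where "D m s = (Q (m+1) s - Q m s) - (P (m+1) s - P m s)" for m s
  have mL: "m \<in> L" "m + 1 \<in> L" if "m \<in> K" for m using that unfolding K_def L_def by auto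
  have cFQ: "continuous_on {0..T} (\<lambda>s. Fd L (\<lambda>i. Q i s) m)" if "m \<in> K" for m
    using finL mL[OF that] contQ ordQ unfolding L_def by (intro contFd) auto
  have cFP: "continuous_on {0..T} (\<lambda>s. Fd L (\<lambda>i. P i s) m)" if "m \<in> K" for m
    using finL mL[OF that] contP ordP unfolding L_def by (intro contFd) auto
  have cD: "continuous_on {0..T} (D m)" if "m \<in> K" for m
    unfolding D_def using mL[OF that] contQ contP unfolding L_def by (intro continuous_intros) auto
  have gapc: "\<exists>c>0. \<forall>s\<in>{0..T}. c \<le> Q (m+1) s - Q m s \<and> c \<le> P (m+1) s - P m s" if m: "m \<in> K" for m
  proof -
    have "continuous_on {0..T} (\<lambda>s. min (Q (m+1) s - Q m s) (P (m+1) s - P m s))"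
      using mL[OF m] contQ contP unfolding L_def by (intro continuous_intros) auto
    then obtain s0 where s0: "s0 \<in> {0..T}"
      and mn: "\<And>s. s \<in> {0..T} \<Longrightarrow> min (Q (m+1) s0 - Q m s0) (P (m+1) s0 - P m s0) \<le> min (Q (m+1) s - Q m s) (P (m+1) s - P m s)"
      using continuous_attains_inf[of "{0..T}"] T by fastforce
    have "Q m s0 < Q (m+1) s0" "P m s0 < P (m+1) s0"
      using ordQ[of m "m+1" s0] ordP[of m "m+1" s0] mL[OF m] s0 unfolding L_def by auto
    then show ?thesis using mn
      by (intro exI[of _ "min (Q (m+1) s0 - Q m s0) (P (m+1) s0 - P m s0)"]) auto
  qed
  have "\<forall>m\<in>K. \<exists>c. c > 0 \<and> (\<forall>s\<in>{0..T}. c \<le> Q (m+1) s - Q m s \<and> c \<le> P (m+1) s - P m s)"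
    using gapc by blast
  from bchoice[OF this] obtain cf where cf0: "\<forall>m\<in>K. cf m > 0 \<and> (\<forall>s\<in>{0..T}. cf m \<le> Q (m+1) s - Q m s \<and> cf m \<le> P (m+1) s - P m s)"
    by blast
  have cf: "\<And>m. m \<in> K \<Longrightarrow> cf m > 0 \<and> (\<forall>s\<in>{0..T}. cf m \<le> Q (m+1) s - Q m s \<and> cf m \<le> P (m+1) s - P m s)"
    using cf0 by blast
  define c where "c = Min (insert 1 (cf ` K))"
  have cpos: "c > 0" unfolding c_def using finK cf by (subst Min_gr_iff) auto
  have cle: "c \<le> cf m" if "m \<in> K" for m unfolding c_def using finK that by (intro Min_le) auto
  have gQ: "c \<le> Q (m+1) s - Q m s" "c \<le> P (m+1) s - P m s" if "m \<in> K" "s \<in> {0..T}" for m s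
    using cf[OF that(1)] cle[OF that(1)] that(2) by (meson order.trans)+
  define Cst where "Cst = (1 + real (card L)) / c^2"
  have Cst0: "Cst \<ge> 0" unfolding Cst_def by auto
  define neg where "neg s = (\<Sum>m\<in>K. max 0 (- D m s))" for s
  have lowF: "Fd L (\<lambda>i. Q i s) m - Fd L (\<lambda>i. P i s) m \<ge> - Cst * (\<bar>D m s\<bar> + neg s)"
    if m: "m \<in> K" and s: "s \<in> {0..T}" for m s
    unfolding Cst_def neg_def K_def
  proof (rule Fd_lower[of L a b c "\<lambda>i. P i s" "\<lambda>i. Q i s" "\<lambda>m. D m s" m])
    show "L = {a..b}" by (simp add: L_def)
    show "c > 0" by (rule cpos)
    show "\<And>i. a \<le> i \<Longrightarrow> i < b \<Longrightarrow> c \<le> P (i+1) s - P i s" using gQ(2) s unfolding K_def by auto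
    show "\<And>i. a \<le> i \<Longrightarrow> i < b \<Longrightarrow> c \<le> Q (i+1) s - Q i s" using gQ(1) s unfolding K_def by auto
    show "\<And>i. D i s = (Q (i+1) s - Q i s) - (P (i+1) s - P i s)" by (simp add: D_def)
    show "a \<le> m" "m < b" using m unfolding K_def by auto
  qed
  have cneg: "continuous_on {0..T} neg" unfolding neg_def by (intro continuous_intros cD)
  have drift: "D m t' - D m r \<ge> - (\<beta> * Cst) * integral {r..t'} (\<lambda>s. \<bar>D m s\<bar> + (\<Sum>m'\<in>K. max 0 (- D m' s)))"
     and D0: "D m 0 = 0"
    if m: "m \<in> K" and r: "0 \<le> r" "r \<le> t'" "t' \<le> T" for m r t'
  proof -
    have mm: "m \<in> {a..b}" "m + 1 \<in> {a..b}" using mL[OF m] unfolding L_def by auto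
    have h1: "\<And>t. t \<in> {0..T} \<Longrightarrow> set_integrable lborel {0..t} (hQ (m+1)) \<and> Q (m+1) t = x0 (m+1) + W (m+1) t + \<beta> * (LINT s:{0..t}|lborel. hQ (m+1) s)"
        using eqQ mm by blast
    have h2: "\<And>t. t \<in> {0..T} \<Longrightarrow> set_integrable lborel {0..t} (hQ m) \<and> Q m t = x0 m + W m t + \<beta> * (LINT s:{0..t}|lborel. hQ m s)"
        using eqQ mm by blast
    have h3: "\<And>t. t \<in> {0..T} \<Longrightarrow> set_integrable lborel {0..t} (hP (m+1)) \<and> P (m+1) t = x0 (m+1) + W (m+1) t + \<beta> * (LINT s:{0..t}|lborel. hP (m+1) s)"
        using eqP mm by blast
    have h4: "\<And>t. t \<in> {0..T} \<Longrightarrow> set_integrable lborel {0..t} (hP m) \<and> P m t = x0 m + W m t + \<beta> * (LINT s:{0..t}|lborel. hP m s)"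
        using eqP mm by blast
    have h5: "\<And>s. s \<in> {0..T} \<Longrightarrow> hQ (m+1) s - hQ m s = Fd L (\<lambda>i. Q i s) m"
        using hQF m unfolding K_def L_def by auto
    have h6: "\<And>s. s \<in> {0..T} \<Longrightarrow> hP (m+1) s - hP m s \<le> Fd L (\<lambda>i. P i s) m"
        using hPF m unfolding K_def L_def by auto
    have dl1: "(Q (m+1) 0 - Q m 0) - (P (m+1) 0 - P m 0) = 0"
      by (rule drift_lemma(1)[OF h1 h2 h3 h4 h5 h6 cFQ[OF m] cFP[OF m] \<beta> T]) auto
    have dl2: "((Q (m+1) t' - Q m t') - (P (m+1) t' - P m t')) - ((Q (m+1) r - Q m r) - (P (m+1) r - P m r))
          \<ge> \<beta> * integral {r..t'} (\<lambda>s. Fd L (\<lambda>i. Q i s) m - Fd L (\<lambda>i. P i s) m)"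
      by (rule drift_lemma(2)[OF h1 h2 h3 h4 h5 h6 cFQ[OF m] cFP[OF m] \<beta> T]) (use r in auto)
    show "D m 0 = 0" using dl1 unfolding D_def .
    have sub: "{r..t'} \<subseteq> {0..T}" using r by auto
    have int1: "(\<lambda>s. Fd L (\<lambda>i. Q i s) m - Fd L (\<lambda>i. P i s) m) integrable_on {r..t'}"
      by (rule integrable_continuous_interval)
         (use continuous_on_subset[OF cFQ[OF m] sub] continuous_on_subset[OF cFP[OF m] sub] in \<open>intro continuous_intros\<close>)
    have int2: "(\<lambda>s. - Cst * (\<bar>D m s\<bar> + neg s)) integrable_on {r..t'}"
      by (rule integrable_continuous_interval)
         (use continuous_on_subset[OF cD[OF m] sub] continuous_on_subset[OF cneg sub] in \<open>intro continuous_intros\<close>)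
    have "integral {r..t'} (\<lambda>s. - Cst * (\<bar>D m s\<bar> + neg s))
          \<le> integral {r..t'} (\<lambda>s. Fd L (\<lambda>i. Q i s) m - Fd L (\<lambda>i. P i s) m)"
      by (rule integral_le[OF int2 int1]) (use lowF[OF m] sub in auto)
    then have "\<beta> * integral {r..t'} (\<lambda>s. - Cst * (\<bar>D m s\<bar> + neg s))
          \<le> \<beta> * integral {r..t'} (\<lambda>s. Fd L (\<lambda>i. Q i s) m - Fd L (\<lambda>i. P i s) m)"
      using \<beta> by (rule mult_left_mono)
    moreover have "\<beta> * integral {r..t'} (\<lambda>s. - Cst * (\<bar>D m s\<bar> + neg s))
        = - (\<beta> * Cst) * integral {r..t'} (\<lambda>s. \<bar>D m s\<bar> + (\<Sum>m'\<in>K. max 0 (- D m' s)))"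
      unfolding neg_def by simp
    ultimately show "D m t' - D m r \<ge> - (\<beta> * Cst) * integral {r..t'} (\<lambda>s. \<bar>D m s\<bar> + (\<Sum>m'\<in>K. max 0 (- D m' s)))"
      using dl2 unfolding D_def by linarith
  qed
  have "D k t \<ge> 0"
  proof (rule core_comparison[OF finK _ T cD D0 drift])
    show "0 \<le> \<beta> * Cst" using \<beta> Cst0 by auto
    show "k \<in> K" using k unfolding K_def by auto
  qed (use t T in auto)
  then show ?thesis unfolding D_def by simp
qed



lemma Wconf_mono:
  assumes "Wconf x" "i < j"
  shows "x i < x j"
proof -
  have "\<forall>n::nat. x i < x (i + 1 + int n)"
  proof
    fix n :: nat show "x i < x (i + 1 + int n)"
    proof (induction n)
      case 0 then show ?case using assms(1) unfolding Wconf_def by simp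
    next
      case (Suc n)
      have "x (i + 1 + int n) < x (i + 1 + int n + 1)" using assms(1) unfolding Wconf_def by blast
      then show ?case using Suc by (simp add: add.assoc)
    qed
  qed
  from this[rule_format, of "nat (j - i - 1)"] show ?thesis using assms by simp
qed

lemma Xrg_growth:
  assumes X: "Xrg \<alpha> \<rho> p x" and \<alpha>: "\<alpha> > 0" and \<rho>: "\<rho> > 0"
  obtains R where "R > 0" "\<And>M::nat. M \<ge> 1 \<Longrightarrow> real M \<ge> R \<Longrightarrow> x (int M) \<ge> x 0 + real M * \<rho> / 2 \<and> x (- int M) \<le> x 0 - real M * \<rho> / 2"
proof -
  have E: "\<exists>C. \<forall>m. m \<noteq> 0 \<longrightarrow> \<bar>Av m (gap x) - \<rho>\<bar> * real_of_int \<bar>m\<bar> powr \<alpha> \<le> C"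
    using conjunct1[OF conjunct2[OF X[unfolded Xrg_def]]] .
  obtain C where HC: "\<And>m. m \<noteq> 0 \<Longrightarrow> \<bar>Av m (gap x) - \<rho>\<bar> * real_of_int \<bar>m\<bar> powr \<alpha> \<le> C"
    using E by blast
  define C' where "C' = \<bar>C\<bar> + 1"
  have C'0: "C' > 0" unfolding C'_def by auto
  define R where "R = (2 * C' / \<rho>) powr (1 / \<alpha>)"
  have R0: "R > 0" unfolding R_def using C'0 \<rho> by auto
  have key: "Av m (gap x) \<ge> \<rho> / 2" if m: "m \<noteq> 0" "real_of_int \<bar>m\<bar> \<ge> R" for m
  proof -
    have "R powr \<alpha> = 2 * C' / \<rho>" unfolding R_def using C'0 \<rho> \<alpha> by (simp add: powr_powr)
    moreover have "R powr \<alpha> \<le> real_of_int \<bar>m\<bar> powr \<alpha>" using m R0 \<alpha> by (intro powr_mono2) auto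
    ultimately have pm: "real_of_int \<bar>m\<bar> powr \<alpha> \<ge> 2 * C' / \<rho>" by simp
    have pos: "2 * C' / \<rho> > 0" using C'0 \<rho> by auto
    have "\<bar>Av m (gap x) - \<rho>\<bar> * (2 * C' / \<rho>) \<le> \<bar>Av m (gap x) - \<rho>\<bar> * real_of_int \<bar>m\<bar> powr \<alpha>"
      using pm by (intro mult_left_mono) auto
    also have "\<dots> \<le> C" using HC[OF m(1)] .
    also have "\<dots> < C'" unfolding C'_def by auto
    finally have "\<bar>Av m (gap x) - \<rho>\<bar> * (2 * C' / \<rho>) < C'" .
    then have "\<bar>Av m (gap x) - \<rho>\<bar> * 2 < \<rho>" using C'0 \<rho> by (simp add: field_simps)
    then have "\<bar>Av m (gap x) - \<rho>\<bar> < \<rho> / 2" by simp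
    then show ?thesis unfolding abs_less_iff by linarith
  qed
  show ?thesis
  proof (rule that[OF R0])
    fix M :: nat assume M: "M \<ge> 1" "real M \<ge> R"
    have Mp: "real M > 0" using M by auto
    have t1: "x (int M) - x 0 = (\<Sum>k\<in>{0..<int M}. gap x k)" unfolding gap_def by (rule tele) auto
    have a1: "Av (int M) (gap x) = (x (int M) - x 0) / real M"
      unfolding Av_def t1 by simp
    have k1: "Av (int M) (gap x) \<ge> \<rho> / 2" using key[of "int M"] M by auto
    have t2: "x 0 - x (- int M) = (\<Sum>k\<in>{- int M..<0}. gap x k)" unfolding gap_def by (rule tele) auto
    have a2: "Av (- int M) (gap x) = (x 0 - x (- int M)) / real M"
      unfolding Av_def t2 by simp
    have k2: "Av (- int M) (gap x) \<ge> \<rho> / 2" using key[of "- int M"] M by auto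
    show "x (int M) \<ge> x 0 + real M * \<rho> / 2 \<and> x (- int M) \<le> x 0 - real M * \<rho> / 2"
      using k1 k2 Mp unfolding a1 a2 by (auto simp: field_simps)
  qed
qed

lemma Xrg_unbounded:
  assumes X: "Xrg \<alpha> \<rho> p x" and \<alpha>: "\<alpha> > 0" and \<rho>: "\<rho> > 0"
  shows "\<exists>i. x i > N" "\<exists>i. x i < N"
proof -
  obtain R where R: "R > 0" "\<And>M::nat. M \<ge> 1 \<Longrightarrow> real M \<ge> R \<Longrightarrow> x (int M) \<ge> x 0 + real M * \<rho> / 2 \<and> x (- int M) \<le> x 0 - real M * \<rho> / 2"
    using Xrg_growth[OF assms] by blast
  define M where "M = nat \<lceil>max R (2 * \<bar>N - x 0\<bar> / \<rho>)\<rceil> + 1"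
  have M1: "M \<ge> 1" unfolding M_def by auto
  have MR: "real M \<ge> R" unfolding M_def by linarith
  have MN: "real M > 2 * \<bar>N - x 0\<bar> / \<rho>" unfolding M_def by linarith
  then have "real M * \<rho> > 2 * \<bar>N - x 0\<bar>" using \<rho> by (simp add: field_simps)
  then have big: "real M * \<rho> / 2 > \<bar>N - x 0\<bar>" by simp
  have ab: "N - x 0 \<le> \<bar>N - x 0\<bar>" "x 0 - N \<le> \<bar>N - x 0\<bar>" by auto
  have "x (int M) > N" using R(2)[OF M1 MR] big ab by linarith
  then show "\<exists>i. x i > N" by blast
  have "x (- int M) < N" using R(2)[OF M1 MR] big ab by linarith
  then show "\<exists>i. x i < N" by blast
qed

lemma iplus_prop:
  assumes W: "Wconf x" and u1: "\<exists>i. x i > N" and u2: "\<exists>i. x i < N"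
  shows "x (GREATEST i. x i < N) < N" "\<And>i. x i < N \<Longrightarrow> i \<le> (GREATEST i. x i < N)"
proof -
  obtain i0 where i0: "x i0 > N" using u1 by blast
  obtain i1 where i1: "x i1 < N" using u2 by blast
  have bnd: "i < i0" if "x i < N" for i
  proof (rule ccontr)
    assume "\<not> i < i0"
    then have "i0 = i \<or> i0 < i" by auto
    then have "x i0 \<le> x i" using Wconf_mono[OF W, of i0 i] by auto
    then show False using that i0 by auto
  qed
  define S where "S = {i\<in>{i1..i0}. x i < N}"
  have sub: "S \<subseteq> {i1..i0}" unfolding S_def by auto
  have fS: "finite S" "i1 \<in> S"
     apply (rule finite_subset[OF sub], simp)
    using i1 bnd[OF i1] unfolding S_def by auto
  define g where "g = Max S"
  have gS: "g \<in> S" unfolding g_def using fS by (intro Max_in) auto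
  have gmax: "i \<le> g" if "x i < N" for i
  proof (cases "i < i1")
    case True then show ?thesis using Max_ge[OF fS(1) fS(2)] unfolding g_def by auto
  next
    case False then have "i \<in> S" unfolding S_def using bnd[OF that] that by auto
    then show ?thesis unfolding g_def using fS by auto
  qed
  have eq: "(GREATEST i. x i < N) = g"
    by (rule Greatest_equality) (use gS gmax S_def in auto)
  show "x (GREATEST i. x i < N) < N" unfolding eq using gS S_def by auto
  show "\<And>i. x i < N \<Longrightarrow> i \<le> (GREATEST i. x i < N)" unfolding eq by (rule gmax)
qed

lemma iminus_prop:
  assumes W: "Wconf x" and u1: "\<exists>i. x i > N" and u2: "\<exists>i. x i < N"
  shows "x (LEAST i. x i > N) > N" "\<And>i. x i > N \<Longrightarrow> (LEAST i. x i > N) \<le> i"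
proof -
  obtain i0 where i0: "x i0 < N" using u2 by blast
  obtain i1 where i1: "x i1 > N" using u1 by blast
  have bnd: "i > i0" if "x i > N" for i
  proof (rule ccontr)
    assume "\<not> i > i0"
    then have "i0 = i \<or> i < i0" by auto
    then have "x i \<le> x i0" using Wconf_mono[OF W, of i i0] by auto
    then show False using that i0 by auto
  qed
  define S where "S = {i\<in>{i0..i1}. x i > N}"
  have sub: "S \<subseteq> {i0..i1}" unfolding S_def by auto
  have fS: "finite S" "i1 \<in> S"
     apply (rule finite_subset[OF sub], simp)
    using i1 bnd[OF i1] unfolding S_def by auto
  define g where "g = Min S"
  have gS: "g \<in> S" unfolding g_def using fS by (intro Min_in) auto
  have gmin: "g \<le> i" if "x i > N" for i
  proof (cases "i > i1")
    case True then show ?thesis using Min_le[OF fS(1) fS(2)] unfolding g_def by auto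
  next
    case False then have "i \<in> S" unfolding S_def using bnd[OF that] that by auto
    then show ?thesis unfolding g_def using fS by auto
  qed
  have eq: "(LEAST i. x i > N) = g"
    by (rule Least_equality) (use gS gmin S_def in auto)
  show "x (LEAST i. x i > N) > N" unfolding eq using gS S_def by auto
  show "\<And>i. x i > N \<Longrightarrow> (LEAST i. x i > N) \<le> i" unfolding eq by (rule gmin)
qed

lemma Ln_mono:
  assumes X: "Xrg \<alpha> \<rho> p x" and \<alpha>: "\<alpha> > 0" and \<rho>: "\<rho> > 0"
  shows "iminus x (Suc n) \<le> iminus x n" "iplus x n \<le> iplus x (Suc n)" "Ln x n \<subseteq> Ln x (Suc n)"
proof -
  have W: "Wconf x" using X unfolding Xrg_def by auto
  note U = Xrg_unbounded[OF assms]
  have "x (iplus x n) < real n" unfolding iplus_def by (rule iplus_prop(1)[OF W U])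
  then have "x (iplus x n) < real (Suc n)" by simp
  then show p: "iplus x n \<le> iplus x (Suc n)" unfolding iplus_def by (rule iplus_prop(2)[OF W U])
  have "x (iminus x n) > - real n" unfolding iminus_def by (rule iminus_prop(1)[OF W U])
  then have "x (iminus x n) > - real (Suc n)" by simp
  then show m: "iminus x (Suc n) \<le> iminus x n" unfolding iminus_def by (rule iminus_prop(2)[OF W U])
  show "Ln x n \<subseteq> Ln x (Suc n)" unfolding Ln_def using p m by auto
qed



lemma det_main:
  fixes Xw :: "int \<Rightarrow> real \<Rightarrow> real" and Xnw :: "nat \<Rightarrow> int \<Rightarrow> real \<Rightarrow> real" and Bw :: "int \<Rightarrow> real \<Rightarrow> real"
  assumes \<beta>: "\<beta> \<ge> 1" and \<alpha>: "0 < \<alpha>" and \<rho>: "\<rho> > 0" and X: "Xrg \<alpha> \<rho> p xin"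
    and dbm: "DBM_path \<beta> \<alpha> \<rho> p xin Bw Xw"
    and fin: "\<And>n. n \<ge> 1 \<Longrightarrow> finite_DBM_path \<beta> (Ln xin n) xin Bw (Xnw n)"
    and t: "t \<ge> 0" and n: "n \<ge> 1"
  shows "Yinf (Ln xin (Suc n)) (Xnw (Suc n)) k t \<le> Yinf (Ln xin n) (Xnw n) k t
       \<and> ereal (Xw (k + 1) t - Xw k t) \<le> Yinf (Ln xin n) (Xnw n) k t"
proof (cases "k \<in> Ln xin n \<and> k + 1 \<in> Ln xin n")
  case False
  then show ?thesis unfolding Yinf_def by auto
next
  case True
  define a where "a = iminus xin n"
  define b where "b = iplus xin n"
  define a' where "a' = iminus xin (Suc n)"
  define b' where "b' = iplus xin (Suc n)"
  have L: "Ln xin n = {a..b}" unfolding Ln_def a_def b_def ..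
  have L': "Ln xin (Suc n) = {a'..b'}" unfolding Ln_def a'_def b'_def ..
  have aa: "a' \<le> a" "b \<le> b'" unfolding a_def a'_def b_def b'_def using Ln_mono[OF X \<alpha> \<rho>] by auto
  have LL: "{a..b} \<subseteq> {a'..b'}" using aa by auto
  have k: "a \<le> k" "k < b" using True unfolding L by auto
  have \<beta>0: "\<beta> \<ge> 0" using \<beta> by auto
  have t': "t \<in> {0..t}" using t by auto
  define Q where "Q = Xnw n"
  define hQ where "hQ i s = (1/2) * (\<Sum>j\<in>{a..b} - {i}. 1 / (Q i s - Q j s))" for i s
  have fQ: "finite_DBM_path \<beta> {a..b} xin Bw Q" using fin[OF n] unfolding Q_def L .
  have sub0: "{0..t} \<subseteq> {0..}" by auto
  have contQ: "\<And>i. i \<in> {a..b} \<Longrightarrow> continuous_on {0..t} (Q i)"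
    using fQ continuous_on_subset[OF _ sub0] unfolding finite_DBM_path_def by blast
  have ordQ: "\<And>i j s. i \<in> {a..b} \<Longrightarrow> j \<in> {a..b} \<Longrightarrow> i < j \<Longrightarrow> s \<in> {0..t} \<Longrightarrow> Q i s < Q j s"
    using fQ unfolding finite_DBM_path_def by auto
  have eqQ: "\<And>i t'. i \<in> {a..b} \<Longrightarrow> t' \<in> {0..t} \<Longrightarrow>
        set_integrable lborel {0..t'} (hQ i) \<and> Q i t' = xin i + Bw i t' + \<beta> * (LINT s:{0..t'}|lborel. hQ i s)"
    using fQ unfolding finite_DBM_path_def hQ_def by auto
  have hQF: "\<And>k s. a \<le> k \<Longrightarrow> k < b \<Longrightarrow> s \<in> {0..t} \<Longrightarrow> hQ (k+1) s - hQ k s = Fd {a..b} (\<lambda>i. Q i s) k"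
    unfolding hQ_def Fd_def by (simp add: algebra_simps)
  define P where "P = Xnw (Suc n)"
  define hP where "hP i s = (1/2) * (\<Sum>j\<in>{a'..b'} - {i}. 1 / (P i s - P j s))" for i s
  have fP: "finite_DBM_path \<beta> {a'..b'} xin Bw P" using fin[of "Suc n"] unfolding P_def L' by auto
  have contP: "\<And>i. i \<in> {a..b} \<Longrightarrow> continuous_on {0..t} (P i)"
    using fP LL continuous_on_subset[OF _ sub0] unfolding finite_DBM_path_def by blast
  have ordP': "\<And>i j s. i \<in> {a'..b'} \<Longrightarrow> j \<in> {a'..b'} \<Longrightarrow> i < j \<Longrightarrow> s \<in> {0..t} \<Longrightarrow> P i s < P j s"
    using fP unfolding finite_DBM_path_def by auto
  have ordP: "\<And>i j s. i \<in> {a..b} \<Longrightarrow> j \<in> {a..b} \<Longrightarrow> i < j \<Longrightarrow> s \<in> {0..t} \<Longrightarrow> P i s < P j s"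
    using ordP' LL by blast
  have eqP: "\<And>i t'. i \<in> {a..b} \<Longrightarrow> t' \<in> {0..t} \<Longrightarrow>
        set_integrable lborel {0..t'} (hP i) \<and> P i t' = xin i + Bw i t' + \<beta> * (LINT s:{0..t'}|lborel. hP i s)"
    using fP LL unfolding finite_DBM_path_def hP_def by auto
  have hPF: "hP (k+1) s - hP k s \<le> Fd {a..b} (\<lambda>i. P i s) k" if "a \<le> k" "k < b" "s \<in> {0..t}" for k s
  proof -
    have "hP (k+1) s - hP k s = Fd {a'..b'} (\<lambda>i. P i s) k"
      unfolding hP_def Fd_def by (simp add: algebra_simps)
    also have "\<dots> \<le> Fd {a..b} (\<lambda>i. P i s) k"
      using that LL ordP'[of _ _ s] by (intro Fd_mono) (auto simp: incr_on_def)
    finally show ?thesis .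
  qed
  have c1: "P (k+1) t - P k t \<le> Q (k+1) t - Q k t"
    by (rule window_compare[OF \<beta>0 t contQ contP ordQ ordP eqQ eqP hQF hPF k t'])
  have y1: "Yinf (Ln xin (Suc n)) (Xnw (Suc n)) k t \<le> Yinf (Ln xin n) (Xnw n) k t"
  proof -
    have "k \<in> {a'..b'}" "k + 1 \<in> {a'..b'}" "k \<in> {a..b}" "k + 1 \<in> {a..b}" using k aa by auto
    then show ?thesis unfolding Yinf_def L L' using c1 unfolding P_def Q_def by simp
  qed
  define hX where "hX i s = phi (\<lambda>j. Xw j s) i" for i s
  have Xrgt: "XrgT \<alpha> \<rho> p Xw" using dbm unfolding DBM_path_def by auto
  have cX0: "\<forall>i. continuous_on {0..} (Xw i)" using conjunct1[OF Xrgt[unfolded XrgT_def]] .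
  have contX: "\<And>i. i \<in> {a..b} \<Longrightarrow> continuous_on {0..t} (Xw i)"
    using cX0 continuous_on_subset[OF _ sub0] by blast
  have WX0: "\<forall>s\<ge>0. Wconf (\<lambda>i. Xw i s)" using conjunct1[OF conjunct2[OF Xrgt[unfolded XrgT_def]]] .
  have WX: "\<And>s. s \<ge> 0 \<Longrightarrow> Wconf (\<lambda>i. Xw i s)" using WX0 by blast
  have ordX: "\<And>i j s. i \<in> {a..b} \<Longrightarrow> j \<in> {a..b} \<Longrightarrow> i < j \<Longrightarrow> s \<in> {0..t} \<Longrightarrow> Xw i s < Xw j s"
  proof -
    fix i j s assume "i \<in> {a..b}" "j \<in> {a..b}" "i < j" "s \<in> {0..t}"
    then show "Xw i s < Xw j s" using Wconf_mono[OF WX, of s i j] by auto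
  qed
  have eqX: "\<And>i t'. i \<in> {a..b} \<Longrightarrow> t' \<in> {0..t} \<Longrightarrow>
        set_integrable lborel {0..t'} (hX i) \<and> Xw i t' = xin i + Bw i t' + \<beta> * (LINT s:{0..t'}|lborel. hX i s)"
  proof -
    have E: "\<forall>i. \<forall>t\<ge>0. set_integrable lborel {0..t} (\<lambda>s. phi (\<lambda>j. Xw j s) i)
          \<and> Xw i t = xin i + Bw i t + \<beta> * (LINT s:{0..t}|lborel. phi (\<lambda>j. Xw j s) i)"
      using conjunct2[OF conjunct2[OF dbm[unfolded DBM_path_def]]] .
    fix i t' assume "i \<in> {a..b}" "t' \<in> {0..t}"
    then show "set_integrable lborel {0..t'} (hX i) \<and> Xw i t' = xin i + Bw i t' + \<beta> * (LINT s:{0..t'}|lborel. hX i s)"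
      using E unfolding hX_def by auto
  qed
  have hXF: "hX (k+1) s - hX k s \<le> Fd {a..b} (\<lambda>i. Xw i s) k" if "a \<le> k" "k < b" "s \<in> {0..t}" for k s
    unfolding hX_def
  proof (rule phi_le_Fd)
    show "Wconf (\<lambda>i. Xw i s)" using WX that by auto
    show "convergent (phi_partial (\<lambda>j. Xw j s) k)" "convergent (phi_partial (\<lambda>j. Xw j s) (k+1))"
      using conjunct1[OF conjunct2[OF dbm[unfolded DBM_path_def]]] that by auto
  qed (use that in auto)
  have c2: "Xw (k+1) t - Xw k t \<le> Q (k+1) t - Q k t"
    by (rule window_compare[OF \<beta>0 t contQ contX ordQ ordX eqQ eqX hQF hXF k t'])
  have y2: "ereal (Xw (k + 1) t - Xw k t) \<le> Yinf (Ln xin n) (Xnw n) k t"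
    unfolding Yinf_def L using k c2 unfolding Q_def by auto
  show ?thesis using y1 y2 by auto
qed


theorem lemma7p1:
  fixes M :: "'w measure"
    and \<beta> \<alpha> \<rho> p :: real
    and xin :: "int \<Rightarrow> real"
    and B :: "int \<Rightarrow> real \<Rightarrow> 'w \<Rightarrow> real"
    and X :: "int \<Rightarrow> real \<Rightarrow> 'w \<Rightarrow> real"
    and Xn :: "nat \<Rightarrow> int \<Rightarrow> real \<Rightarrow> 'w \<Rightarrow> real"
  assumes "prob_space M"
    and "\<beta> \<ge> 1" and "0 < \<alpha>" and "\<alpha> < 1" and "\<rho> > 0" and "p > 1"
    and "Xrg \<alpha> \<rho> p xin"
    and "indep_BM_family M B"
    and "\<forall>i t. X i t \<in> borel_measurable M"
    and "AE \<omega> in M. DBM_path \<beta> \<alpha> \<rho> p xin (\<lambda>i t. B i t \<omega>) (\<lambda>i t. X i t \<omega>)"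
    and "\<forall>n i t. n \<ge> 1 \<longrightarrow> Xn n i t \<in> borel_measurable M"
    and "\<forall>n. n \<ge> 1 \<longrightarrow> (AE \<omega> in M. finite_DBM_path \<beta> (Ln xin n) xin
                                     (\<lambda>i t. B i t \<omega>) (\<lambda>i t. Xn n i t \<omega>))"
  shows "AE \<omega> in M. \<forall>t\<ge>0. \<forall>k::int. \<forall>n::nat. n \<ge> 1 \<longrightarrow>
           Yinf (Ln xin (Suc n)) (\<lambda>i s. Xn (Suc n) i s \<omega>) k t
             \<le> Yinf (Ln xin n) (\<lambda>i s. Xn n i s \<omega>) k t
           \<and> ereal (X (k + 1) t \<omega> - X k t \<omega>) \<le> Yinf (Ln xin n) (\<lambda>i s. Xn n i s \<omega>) k t"
proof -
  note X = assms(7)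
  have \<alpha>: "0 < \<alpha>" and \<rho>: "\<rho> > 0" and \<beta>: "\<beta> \<ge> 1" using assms by auto
  have A: "AE \<omega> in M. \<forall>n. n \<ge> 1 \<longrightarrow> finite_DBM_path \<beta> (Ln xin n) xin (\<lambda>i t. B i t \<omega>) (\<lambda>i t. Xn n i t \<omega>)"
    unfolding AE_all_countable
  proof
    fix n :: nat
    show "AE \<omega> in M. n \<ge> 1 \<longrightarrow> finite_DBM_path \<beta> (Ln xin n) xin (\<lambda>i t. B i t \<omega>) (\<lambda>i t. Xn n i t \<omega>)"
      using assms(12) by (cases "n \<ge> 1") auto
  qed
  show ?thesis using assms(10) A
  proof eventually_elim
    case (elim \<omega>)
    show ?case
    proof (intro allI impI)
      fix t :: real and k :: int and n :: nat
      assume t: "t \<ge> 0" and n: "n \<ge> 1"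
      have fin: "\<And>n. n \<ge> 1 \<Longrightarrow> finite_DBM_path \<beta> (Ln xin n) xin (\<lambda>i t. B i t \<omega>) ((\<lambda>n i s. Xn n i s \<omega>) n)"
        using elim(2) by simp
      show "Yinf (Ln xin (Suc n)) (\<lambda>i s. Xn (Suc n) i s \<omega>) k t \<le> Yinf (Ln xin n) (\<lambda>i s. Xn n i s \<omega>) k t
           \<and> ereal (X (k + 1) t \<omega> - X k t \<omega>) \<le> Yinf (Ln xin n) (\<lambda>i s. Xn n i s \<omega>) k t"
        using det_main[OF \<beta> \<alpha> \<rho> X elim(1) fin t n, of k] by simp
    qed
  qed
qed

end
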